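(* Consider the dynamical system $X(t+1)=\operatorname{diag}(|X(t)|\mathbf{1}_n)^{-1}X(t)X(t)^{\top}$ on the domain $\mathcal{S}_{\mathrm{nz\text{-}row}}$, i.e., the map $f_{\mathrm{HbM}}(X)=\operatorname{diag}(|X|\mathbf{1}_n)^{-1}XX^{\top}$. Define $Q_{\mathrm{HbM}}$ as the set of matrices $PYP^{\top}\in\mathcal{S}_{\mathrm{nz\text{-}row}}$ where $P$ is an $n\times n$ permutation matrix and $Y$ is a block diagonal matrix each of whose diagonal blocks has the form $\alpha bb^{\top}$ with $\alpha>0$ and $b\in\{-1,+1\}^m$, $m\le n$ (different blocks may have different $\alpha$, $b$, $m$, with block sizes summing to $n$). Then: (i) $Q_{\mathrm{HbM}}$ is the set of all fixed points of $f_{\mathrm{HbM}}$ in $\mathcal{S}_{\mathrm{nz\text{-}row}}$; (ii) for every $X\in Q_{\mathrm{HbM}}$, $G(X)$ is composed of isolated complete subgraphs that satisfy social balance, i.e., there is a partition of $\{1,\dots,n\}$ into sets $V_1,\dots,V_K$ such that $X_{ij}=0$ whenever $i,j$ lie in different sets, and for each $k$ the principal submatrix of $X$ indexed by $V_k$ has all entries non-zero and its graph satisfies social balance.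
   Context: $\mathcal{S}_{\mathrm{nz\text{-}row}}=\{X\in\mathbb{R}^{n\times n}: \text{every row of }X\text{ is non-zero}\}$. $|X|$ is the entry-wise absolute value and $\mathbf{1}_n$ the all-ones vector. $G(X)$ is the weighted digraph with (possibly negative) adjacency matrix $X$. For a square matrix $Z$, $G(Z)$ satisfies social balance if (S1) $Z_{ii}>0$ for all $i$ and (S2) $\operatorname{sign}(Z_{ij})\operatorname{sign}(Z_{jk})\operatorname{sign}(Z_{ki})=1$ for all indices $i,j,k$, where $\operatorname{sign}$ is the sign function. *)

theory Defs
  imports "Jordan_Normal_Form.Matrix" "Jordan_Normal_Form.DL_Submatrix" "HOL-Library.Disjoint_Sets"
begin

definition S_nzrow :: "nat \<Rightarrow> real mat set" where
  "S_nzrow n = {X \<in> carrier_mat n n. \<forall>i<n. row X i \<noteq> 0\<^sub>v n}"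

definition diag_of_vec :: "real vec \<Rightarrow> real mat" where
  "diag_of_vec d = mat (dim_vec d) (dim_vec d) (\<lambda>(i,j). if i = j then d $ i else 0)"

definition abs_mat :: "real mat \<Rightarrow> real mat" where
  "abs_mat X = map_mat abs X"

text \<open>f_HbM(X) = diag(|X| 1_n)^{-1} X X^T; the inverse of a diagonal matrix with
  non-zero diagonal is the diagonal matrix of reciprocals.\<close>
definition f_HbM :: "real mat \<Rightarrow> real mat" where
  "f_HbM X = diag_of_vec (map_vec inverse (abs_mat X *\<^sub>v vec (dim_row X) (\<lambda>_. 1))) * X * X\<^sup>T"

definition perm_mat :: "nat \<Rightarrow> (nat \<Rightarrow> nat) \<Rightarrow> real mat" where
  "perm_mat n p = mat n n (\<lambda>(i,j). if p i = j then 1 else 0)"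

definition is_perm_mat :: "nat \<Rightarrow> real mat \<Rightarrow> bool" where
  "is_perm_mat n P \<longleftrightarrow> (\<exists>p. p permutes {..<n} \<and> P = perm_mat n p)"

definition is_hbm_block :: "real mat \<Rightarrow> bool" where
  "is_hbm_block B \<longleftrightarrow> (\<exists>\<alpha> b. \<alpha> > 0 \<and> (\<forall>i<dim_vec b. b $ i = 1 \<or> b $ i = -1) \<and>
      B = \<alpha> \<cdot>\<^sub>m (mat (dim_vec b) (dim_vec b) (\<lambda>(i,j). b $ i * b $ j)))"

definition Q_HbM :: "nat \<Rightarrow> real mat set" where
  "Q_HbM n = {X. \<exists>P Bs. is_perm_mat n P \<and> (\<forall>B\<in>set Bs. is_hbm_block B \<and> dim_row B \<le> n)
      \<and> sum_list (map dim_row Bs) = n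
      \<and> X = P * diag_block_mat Bs * P\<^sup>T \<and> X \<in> S_nzrow n}"

definition social_balance :: "real mat \<Rightarrow> bool" where
  "social_balance Z \<longleftrightarrow> (\<forall>i<dim_row Z. Z $$ (i,i) > 0) \<and>
     (\<forall>i<dim_row Z. \<forall>j<dim_row Z. \<forall>k<dim_row Z.
        sgn (Z $$ (i,j)) * sgn (Z $$ (j,k)) * sgn (Z $$ (k,i)) = 1)"

end

theory Submission
  imports Defs
begin

definition isG :: "nat \<Rightarrow> (nat \<Rightarrow> nat \<Rightarrow> real) \<Rightarrow> bool" where
  "isG n F \<longleftrightarrow> (\<exists>c a s. (\<forall>i<n. a i > 0 \<and> (s i = 1 \<or> s i = -1)) \<and>
     (\<forall>i<n. \<forall>j<n. c i = c j \<longrightarrow> a i = a j) \<and>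
     (\<forall>i<n. \<forall>j<n. F i j = (if (c::nat\<Rightarrow>nat) i = c j then a i * s i * s j else 0)))"

lemma f_carrier: "X \<in> carrier_mat n n \<Longrightarrow> f_HbM X \<in> carrier_mat n n"
  by (auto simp: f_HbM_def diag_of_vec_def abs_mat_def)

lemma f_entry:
  assumes X: "X \<in> carrier_mat n n" and i: "i < n" and j: "j < n"
  shows "f_HbM X $$ (i,j) = inverse (\<Sum>k<n. \<bar>X $$ (i,k)\<bar>) * (\<Sum>k<n. X $$ (i,k) * X $$ (j,k))"
    and "f_HbM X \<in> carrier_mat n n"
proof -
  define v where "v = map_vec inverse (abs_mat X *\<^sub>v vec (dim_row X) (\<lambda>_. 1))"
  have dv: "dim_vec v = n" using X by (simp add: v_def abs_mat_def)
  have vi: "v $ i = inverse (\<Sum>k<n. \<bar>X $$ (i,k)\<bar>)" if "i < n" for i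
    using X that by (simp add: v_def abs_mat_def scalar_prod_def lessThan_atLeast0)
  define D where "D = diag_of_vec v"
  have D: "D \<in> carrier_mat n n" using dv by (simp add: D_def diag_of_vec_def)
  have DX: "(D * X) $$ (i,k) = v $ i * X $$ (i,k)" if "i < n" "k < n" for i k
  proof -
    have "(D * X) $$ (i,k) = (\<Sum>l\<in>{0..<n}. D $$ (i,l) * X $$ (l,k))"
      using D X that by (simp add: scalar_prod_def)
    also have "\<dots> = (\<Sum>l\<in>{0..<n}. if l = i then v $ i * X $$ (i,k) else 0)"
      using that dv by (intro sum.cong) (auto simp: D_def diag_of_vec_def)
    also have "\<dots> = v $ i * X $$ (i,k)" using that by simp
    finally show ?thesis .
  qed
  have fe: "f_HbM X = D * X * X\<^sup>T" by (simp add: f_HbM_def D_def v_def)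
  show "f_HbM X \<in> carrier_mat n n" unfolding fe using D X by auto
  have "(D * X * X\<^sup>T) $$ (i,j) = (\<Sum>k\<in>{0..<n}. (D * X) $$ (i,k) * X\<^sup>T $$ (k,j))"
    using D X i j by (subst index_mult_mat(1)) (auto simp: scalar_prod_def)
  also have "\<dots> = (\<Sum>k\<in>{0..<n}. v $ i * (X $$ (i,k) * X $$ (j,k)))"
    using X i j DX by (intro sum.cong) auto
  also have "\<dots> = inverse (\<Sum>k<n. \<bar>X $$ (i,k)\<bar>) * (\<Sum>k<n. X $$ (i,k) * X $$ (j,k))"
    using vi[OF i] by (simp add: sum_distrib_left lessThan_atLeast0)
  finally show "f_HbM X $$ (i,j) = inverse (\<Sum>k<n. \<bar>X $$ (i,k)\<bar>) * (\<Sum>k<n. X $$ (i,k) * X $$ (j,k))"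
    unfolding fe .
qed

lemma sq_pm1: "(s::real) = 1 \<or> s = -1 \<Longrightarrow> s * s = 1" by auto

lemma G_fix:
  assumes X: "X \<in> carrier_mat n n" and G: "isG n (\<lambda>i j. X $$ (i,j))"
  shows "X \<in> S_nzrow n \<and> f_HbM X = X"
proof -
  obtain c :: "nat \<Rightarrow> nat" and a s where as0: "\<forall>i<n. a i > 0 \<and> (s i = 1 \<or> s i = -1)"
    and ac0: "\<forall>i<n. \<forall>j<n. c i = c j \<longrightarrow> a i = a j"
    and Xe0: "\<forall>i<n. \<forall>j<n. X $$ (i,j) = (if c i = c j then a i * s i * s j else 0)"
    using G unfolding isG_def by blast
  note as = as0[rule_format] and ac = ac0[rule_format] and Xe = Xe0[rule_format]
  define C where "C i = {k\<in>{..<n}. c k = c i}" for i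
  have finC: "finite (C i)" for i by (simp add: C_def)
  have cardC: "card (C i) > 0" if "i < n" for i
    using that finC[of i] by (auto simp: C_def card_gt_0_iff)
  have absum: "(\<Sum>k<n. \<bar>X $$ (i,k)\<bar>) = a i * card (C i)" if i: "i < n" for i
  proof -
    have "(\<Sum>k<n. \<bar>X $$ (i,k)\<bar>) = (\<Sum>k<n. if c k = c i then a i else 0)"
    proof (intro sum.cong refl)
      fix k assume k: "k \<in> {..<n}"
      show "\<bar>X $$ (i,k)\<bar> = (if c k = c i then a i else 0)"
        using Xe[OF i, of k] k as[OF i] as[of k] i by (auto simp: abs_mult)
    qed
    also have "\<dots> = (\<Sum>k\<in>C i. a i)" unfolding C_def by (subst sum.inter_filter) auto
    also have "\<dots> = a i * card (C i)" by simp
    finally show ?thesis .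
  qed
  have prodsum: "(\<Sum>k<n. X $$ (i,k) * X $$ (j,k)) = (if c i = c j then a i * a i * s i * s j * card (C i) else 0)"
    if i: "i < n" and j: "j < n" for i j
  proof -
    have "(\<Sum>k<n. X $$ (i,k) * X $$ (j,k)) = (\<Sum>k<n. if c k = c i then (if c i = c j then a i * a i * s i * s j else 0) else 0)"
    proof (intro sum.cong refl)
      fix k assume k: "k \<in> {..<n}"
      have sk: "s k * s k = 1" using as[of k] k by auto
      show "X $$ (i,k) * X $$ (j,k) = (if c k = c i then (if c i = c j then a i * a i * s i * s j else 0) else 0)"
        using Xe[OF i, of k] Xe[OF j, of k] k ac[OF i j] sk
        by (auto simp: algebra_simps)
    qed
    also have "\<dots> = (\<Sum>k\<in>C i. (if c i = c j then a i * a i * s i * s j else 0))" unfolding C_def by (subst sum.inter_filter) auto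
    also have "\<dots> = (if c i = c j then a i * a i * s i * s j * card (C i) else 0)" by simp
    finally show ?thesis .
  qed
  have "f_HbM X = X"
  proof (rule eq_matI)
    fix i j assume i: "i < dim_row X" and j: "j < dim_col X"
    hence i': "i < n" and j': "j < n" using X by auto
    have "a i > 0" "card (C i) > 0" using as[OF i'] cardC[OF i'] by auto
    then show "f_HbM X $$ (i,j) = X $$ (i,j)"
      unfolding f_entry(1)[OF X i' j'] absum[OF i'] prodsum[OF i' j'] Xe[OF i' j']
      by (auto simp: field_simps)
  qed (use f_carrier[OF X] X in auto)
  moreover have "X \<in> S_nzrow n"
    unfolding S_nzrow_def
  proof (intro CollectI conjI allI impI X)
    fix i assume i: "i < n"
    have "row X i $ i = a i" using X i Xe[OF i i] as[OF i] by auto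
    moreover have "(0\<^sub>v n :: real vec) $ i = 0" using i by simp
    ultimately show "row X i \<noteq> 0\<^sub>v n" using as[OF i] by auto
  qed
  ultimately show ?thesis by simp
qed

lemma sgn_pm: "(a::real) > 0 \<Longrightarrow> (s = 1 \<or> s = -1) \<Longrightarrow> (t = 1 \<or> t = -1) \<Longrightarrow> sgn (a * s * t) = s * t"
  by (auto simp: sgn_mult)

lemma G_part2:
  assumes X: "X \<in> carrier_mat n n" and G: "isG n (\<lambda>i j. X $$ (i,j))"
  shows "\<exists>\<V>. partition_on {..<n} \<V> \<and>
           (\<forall>i<n. \<forall>j<n. (\<forall>V\<in>\<V>. \<not> (i \<in> V \<and> j \<in> V)) \<longrightarrow> X $$ (i,j) = 0) \<and>
           (\<forall>V\<in>\<V>. (\<forall>i<card V. \<forall>j<card V. submatrix X V V $$ (i,j) \<noteq> 0)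
                    \<and> social_balance (submatrix X V V))"
proof -
  obtain c :: "nat \<Rightarrow> nat" and a s where as0: "\<forall>i<n. a i > 0 \<and> (s i = 1 \<or> s i = -1)"
    and ac0: "\<forall>i<n. \<forall>j<n. c i = c j \<longrightarrow> a i = a j"
    and Xe0: "\<forall>i<n. \<forall>j<n. X $$ (i,j) = (if c i = c j then a i * s i * s j else 0)"
    using G unfolding isG_def by blast
  note as = as0[rule_format] and ac = ac0[rule_format] and Xe = Xe0[rule_format]
  define C where "C i = {k. k < n \<and> c k = c i}" for i
  define V where "V = C ` {..<n}"
  have part: "partition_on {..<n} V"
  proof (rule partition_onI)
    show "\<Union>V = {..<n}" unfolding V_def C_def by auto
    show "disjnt p q" if "p \<in> V" "q \<in> V" "p \<noteq> q" for p q
      using that unfolding V_def C_def disjnt_def by auto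
    show "{} \<notin> V" unfolding V_def C_def by auto
  qed
  have zero: "\<forall>i<n. \<forall>j<n. (\<forall>W\<in>V. \<not> (i \<in> W \<and> j \<in> W)) \<longrightarrow> X $$ (i,j) = 0"
  proof (intro allI impI)
    fix i j assume i: "i < n" and j: "j < n" and H: "\<forall>W\<in>V. \<not> (i \<in> W \<and> j \<in> W)"
    have "C i \<in> V" using i by (simp add: V_def)
    with H i j have "c j \<noteq> c i" unfolding C_def by auto
    then show "X $$ (i,j) = 0" using Xe[OF i j] by auto
  qed
  have blocks: "(\<forall>k<card W. \<forall>l<card W. submatrix X W W $$ (k,l) \<noteq> 0) \<and> social_balance (submatrix X W W)"
    if W: "W \<in> V" for W
  proof -
    obtain i0 where i0: "i0 < n" and Wd: "W = C i0" using W unfolding V_def by auto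
    have Wsub: "W \<subseteq> {..<n}" unfolding Wd C_def by auto
    have cW: "card {i. i < dim_row X \<and> i \<in> W} = card W" "card {i. i < dim_col X \<and> i \<in> W} = card W"
      using X Wsub by (auto intro!: arg_cong[where f=card])
    have pk: "pick W k < n \<and> c (pick W k) = c i0" if "k < card W" for k
      using pick_in_set_le[OF that] unfolding Wd C_def by auto
    have ent: "submatrix X W W $$ (k,l) = a i0 * s (pick W k) * s (pick W l)" if "k < card W" "l < card W" for k l
      using submatrix_index[of k X W l W] cW that pk[OF that(1)] pk[OF that(2)] Xe ac[OF _ i0]
      by auto
    have dimS: "dim_row (submatrix X W W) = card W" using cW by (simp add: dim_submatrix)
    have sgnent: "sgn (submatrix X W W $$ (k,l)) = s (pick W k) * s (pick W l)" if "k < card W" "l < card W" for k l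
      unfolding ent[OF that] using sgn_pm[of "a i0"] as[OF i0] as pk[OF that(1)] pk[OF that(2)] by auto
    show ?thesis unfolding social_balance_def dimS
    proof (intro conjI allI impI)
      fix k l assume k: "k < card W" and l: "l < card W"
      show "submatrix X W W $$ (k,l) \<noteq> 0" unfolding ent[OF k l]
        using as[OF i0] as[OF pk[OF k, THEN conjunct1]] as[OF pk[OF l, THEN conjunct1]] by auto
    next
      fix k assume k: "k < card W"
      show "submatrix X W W $$ (k,k) > 0" unfolding ent[OF k k]
        using as[OF i0] as[OF pk[OF k, THEN conjunct1]] by auto
    next
      fix i j k assume i: "i < card W" and j: "j < card W" and k: "k < card W"
      have "s (pick W i) * s (pick W i) = 1" "s (pick W j) * s (pick W j) = 1" "s (pick W k) * s (pick W k) = 1"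
        using as[OF pk[OF i, THEN conjunct1]] as[OF pk[OF j, THEN conjunct1]] as[OF pk[OF k, THEN conjunct1]] by auto
      then show "sgn (submatrix X W W $$ (i, j)) * sgn (submatrix X W W $$ (j, k)) * sgn (submatrix X W W $$ (k, i)) = 1"
        unfolding sgnent[OF i j] sgnent[OF j k] sgnent[OF k i] by (simp add: algebra_simps)
    qed
  qed
  show ?thesis using part zero blocks by blast
qed

lemma sq_expand:
  fixes x y :: "nat \<Rightarrow> real"
  shows "(\<Sum>k<n. (x k - \<sigma> * y k) * (x k - \<sigma> * y k)) =
    (\<Sum>k<n. x k * x k) - 2 * \<sigma> * (\<Sum>k<n. x k * y k) + \<sigma> * \<sigma> * (\<Sum>k<n. y k * y k)"
  by (simp add: algebra_simps sum.distrib sum_subtractf sum_distrib_left)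

lemma fix_G:
  assumes XS: "X \<in> S_nzrow n" and F: "f_HbM X = X"
  shows "isG n (\<lambda>i j. X $$ (i,j))"
proof -
  have Xc: "X \<in> carrier_mat n n" using XS by (simp add: S_nzrow_def)
  define x where "x i k = X $$ (i,k)" for i k
  define d where "d i = (\<Sum>k<n. \<bar>x i k\<bar>)" for i
  define M where "M i j = (\<Sum>k<n. x i k * x j k)" for i j
  define t where "t i = M i i" for i
  have fx: "x i j = inverse (d i) * M i j" if "i < n" "j < n" for i j
    using f_entry(1)[OF Xc that] F unfolding x_def d_def M_def by simp
  have nz: "\<exists>k<n. x i k \<noteq> 0" if i: "i < n" for i
  proof (rule ccontr)
    assume "\<not> (\<exists>k<n. x i k \<noteq> 0)"
    hence "row X i = 0\<^sub>v n" using Xc i by (intro eq_vecI) (auto simp: x_def)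
    thus False using XS i by (auto simp: S_nzrow_def)
  qed
  have dpos: "d i > 0" if i: "i < n" for i
  proof -
    obtain k where k: "k < n" "x i k \<noteq> 0" using nz[OF i] by auto
    have "\<bar>x i k\<bar> \<le> d i" unfolding d_def by (rule member_le_sum) (use k in auto)
    thus ?thesis using k by auto
  qed
  have tpos: "t i > 0" if i: "i < n" for i
  proof -
    obtain k where k: "k < n" "x i k \<noteq> 0" using nz[OF i] by auto
    have "x i k * x i k \<le> t i" unfolding t_def M_def by (rule member_le_sum) (use k in auto)
    moreover have "x i k * x i k > 0" using k not_real_square_gt_zero by blast
    ultimately show ?thesis by auto
  qed
  have Mdx: "M i j = d i * x i j" if "i < n" "j < n" for i j
    using fx[OF that] dpos[OF that(1)] by (simp add: field_simps)
  have Msym: "M i j = M j i" for i j unfolding M_def by (simp add: mult.commute)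
  have E1: "(\<Sum>j<n. \<bar>M i j\<bar>) = d i * d i" if i: "i < n" for i
  proof -
    have "(\<Sum>j<n. \<bar>M i j\<bar>) = (\<Sum>j<n. d i * \<bar>x i j\<bar>)"
      using Mdx[OF i] dpos[OF i] by (intro sum.cong) (auto simp: abs_mult)
    also have "\<dots> = d i * d i" unfolding d_def by (simp add: sum_distrib_left)
    finally show ?thesis .
  qed
  have E2: "(\<Sum>j<n. M i j * M i j) = t i * (\<Sum>j<n. \<bar>M i j\<bar>)" if i: "i < n" for i
  proof -
    have "(\<Sum>j<n. M i j * M i j) = (\<Sum>j<n. (d i * d i) * (x i j * x i j))"
      using Mdx[OF i] by (intro sum.cong) auto
    also have "\<dots> = (d i * d i) * t i" unfolding t_def M_def by (simp add: sum_distrib_left)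
    finally show ?thesis using E1[OF i] by simp
  qed
  have S1: "(\<Sum>i<n. \<Sum>j<n. M i j * M i j) = (\<Sum>i<n. \<Sum>j<n. t i * \<bar>M i j\<bar>)"
    using E2 by (simp add: sum_distrib_left)
  have S2: "(\<Sum>i<n. \<Sum>j<n. t i * \<bar>M i j\<bar>) = (\<Sum>i<n. \<Sum>j<n. t j * \<bar>M i j\<bar>)"
    by (subst sum.swap) (simp add: Msym)
  define T where "T i j = \<bar>M i j\<bar> * (t i + t j - 2 * \<bar>M i j\<bar>)" for i j
  have Tsum: "(\<Sum>i<n. \<Sum>j<n. T i j) = 0"
  proof -
    have "(\<Sum>i<n. \<Sum>j<n. T i j) = (\<Sum>i<n. \<Sum>j<n. t i * \<bar>M i j\<bar>) + (\<Sum>i<n. \<Sum>j<n. t j * \<bar>M i j\<bar>) - 2 * (\<Sum>i<n. \<Sum>j<n. M i j * M i j)"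
      unfolding T_def by (simp add: algebra_simps sum.distrib sum_subtractf sum_distrib_left abs_mult_self_eq)
    thus ?thesis using S1 S2 by simp
  qed
  have sqid: "(\<Sum>k<n. (x i k - sgn (M i j) * x j k) * (x i k - sgn (M i j) * x j k)) = t i + t j - 2 * \<bar>M i j\<bar>"
    if "M i j \<noteq> 0" for i j
  proof -
    have "sgn (M i j) * sgn (M i j) = 1" "sgn (M i j) * M i j = \<bar>M i j\<bar>"
      using that by (auto simp: sgn_if)
    then show ?thesis unfolding sq_expand t_def by (simp add: M_def[symmetric] algebra_simps)
  qed
  have Tnn: "T i j \<ge> 0" for i j
  proof (cases "M i j = 0")
    case True then show ?thesis by (simp add: T_def)
  next
    case False
    have "0 \<le> (\<Sum>k<n. (x i k - sgn (M i j) * x j k) * (x i k - sgn (M i j) * x j k))"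
      by (intro sum_nonneg) auto
    then show ?thesis unfolding T_def sqid[OF False] by simp
  qed
  have T0: "T i j = 0" if "i < n" "j < n" for i j
  proof -
    have "\<forall>i\<in>{..<n}. (\<Sum>j<n. T i j) = 0"
      using Tsum by (subst (asm) sum_nonneg_eq_0_iff) (auto intro: sum_nonneg Tnn)
    hence "(\<Sum>j<n. T i j) = 0" using that by auto
    thus ?thesis using that by (subst (asm) sum_nonneg_eq_0_iff) (auto intro: Tnn)
  qed
  have rowrel: "\<forall>k<n. x i k = sgn (M i j) * x j k" if ij: "i < n" "j < n" and Mnz: "M i j \<noteq> 0" for i j
  proof -
    have "t i + t j - 2 * \<bar>M i j\<bar> = 0" using T0[OF ij] Mnz by (simp add: T_def)
    hence "(\<Sum>k<n. (x i k - sgn (M i j) * x j k) * (x i k - sgn (M i j) * x j k)) = 0"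
      using sqid[OF Mnz] by simp
    hence "\<forall>k\<in>{..<n}. (x i k - sgn (M i j) * x j k) * (x i k - sgn (M i j) * x j k) = 0"
      by (subst (asm) sum_nonneg_eq_0_iff) auto
    thus ?thesis by auto
  qed
  have scaled: "d i = d j \<and> t i = t j \<and> M i l = \<sigma> * M j l"
    if "\<forall>k<n. x i k = \<sigma> * x j k" "\<sigma> = 1 \<or> \<sigma> = -1" for i j l \<sigma>
  proof -
    have e: "x i k = \<sigma> * x j k" if "k \<in> {..<n}" for k using that \<open>\<forall>k<n. x i k = \<sigma> * x j k\<close> by auto
    have s2: "\<sigma> * \<sigma> = 1" "\<bar>\<sigma>\<bar> = 1" using \<open>\<sigma> = 1 \<or> \<sigma> = -1\<close> by auto
    have "d i = (\<Sum>k<n. \<bar>\<sigma>\<bar> * \<bar>x j k\<bar>)" unfolding d_def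
      by (rule sum.cong) (auto simp: e abs_mult)
    hence "d i = d j" using s2 by (simp add: d_def)
    moreover have "t i = (\<Sum>k<n. (\<sigma> * \<sigma>) * (x j k * x j k))" unfolding t_def M_def
      by (rule sum.cong) (auto simp: e algebra_simps)
    hence "t i = t j" using s2 by (simp add: t_def M_def)
    moreover have "M i l = (\<Sum>k<n. \<sigma> * (x j k * x l k))" unfolding M_def
      by (rule sum.cong) (auto simp: e algebra_simps)
    hence "M i l = \<sigma> * M j l" by (simp add: M_def sum_distrib_left)
    ultimately show ?thesis by simp
  qed
  define P where "P i r \<longleftrightarrow> (\<exists>\<sigma>. (\<sigma> = 1 \<or> \<sigma> = -1) \<and> (\<forall>k<n. x i k = \<sigma> * x r k))" for i r
  define c where "c i = (LEAST r. P i r)" for i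
  define s where "s i = (if \<forall>k<n. x i k = x (c i) k then 1 else (-1::real))" for i
  define a where "a i = t i / d i" for i
  have Pc: "P i (c i)" for i
    unfolding c_def by (rule LeastI[of _ i]) (auto simp: P_def intro!: exI[of _ 1])
  have rowc: "\<forall>k<n. x i k = s i * x (c i) k" for i
  proof -
    obtain \<sigma> where \<sigma>: "\<sigma> = 1 \<or> \<sigma> = -1" "\<forall>k<n. x i k = \<sigma> * x (c i) k" using Pc[of i] by (auto simp: P_def)
    show ?thesis
    proof (cases "\<forall>k<n. x i k = x (c i) k")
      case True then show ?thesis by (simp add: s_def)
    next
      case False
      hence "\<sigma> = -1" using \<sigma> by auto
      thus ?thesis using False \<sigma> by (simp add: s_def)
    qed
  qed
  have s_pm: "s i = 1 \<or> s i = -1" for i by (simp add: s_def)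
  have samec: "c i = c j" if "\<forall>k<n. x i k = \<sigma> * x j k" "\<sigma> = 1 \<or> \<sigma> = -1" for i j \<sigma>
  proof -
    have ji: "\<forall>k<n. x j k = \<sigma> * x i k" using that by auto
    have "P i = P j"
    proof (intro ext iffI)
      fix r assume "P i r"
      then obtain \<tau> where "\<tau> = 1 \<or> \<tau> = -1" "\<forall>k<n. x i k = \<tau> * x r k" by (auto simp: P_def)
      then show "P j r" unfolding P_def using ji that(2)
        by (intro exI[of _ "\<sigma> * \<tau>"]) auto
    next
      fix r assume "P j r"
      then obtain \<tau> where "\<tau> = 1 \<or> \<tau> = -1" "\<forall>k<n. x j k = \<tau> * x r k" by (auto simp: P_def)
      then show "P i r" unfolding P_def using that
        by (intro exI[of _ "\<sigma> * \<tau>"]) auto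
    qed
    thus ?thesis unfolding c_def by simp
  qed
  have dc: "d i = d (c i)" and tc: "t i = t (c i)" for i
    using scaled[OF rowc[of i] s_pm[of i]] by auto
  have G1: "\<forall>i<n. a i > 0 \<and> (s i = 1 \<or> s i = -1)"
    using tpos dpos s_pm by (simp add: a_def)
  have G2: "\<forall>i<n. \<forall>j<n. c i = c j \<longrightarrow> a i = a j"
    unfolding a_def using dc tc by metis
  have G3: "\<forall>i<n. \<forall>j<n. X $$ (i,j) = (if c i = c j then a i * s i * s j else 0)"
  proof (intro allI impI)
    fix i j assume i: "i < n" and j: "j < n"
    show "X $$ (i,j) = (if c i = c j then a i * s i * s j else 0)"
    proof (cases "c i = c j")
      case True
      have "M i j = s i * M (c i) j" using scaled[OF rowc[of i] s_pm[of i]] by blast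
      also have "M (c i) j = M j (c i)" by (rule Msym)
      also have "M j (c i) = s j * M (c j) (c i)" using scaled[OF rowc[of j] s_pm[of j]] by blast
      also have "M (c j) (c i) = t (c i)" using True by (simp add: t_def)
      finally have "M i j = s i * s j * t (c i)" by simp
      then show ?thesis using True fx[OF i j] dc[of i] tc[of i] unfolding x_def a_def
        by (simp add: field_simps)
    next
      case False
      have "M i j = 0"
      proof (rule ccontr)
        assume Mnz: "M i j \<noteq> 0"
        have "c i = c j" by (rule samec[OF rowrel[OF i j Mnz]]) (use Mnz in \<open>auto simp: sgn_if\<close>)
        with False show False by simp
      qed
      then show ?thesis using False fx[OF i j] unfolding x_def by simp
    qed
  qed
  show ?thesis unfolding isG_def using G1 G2 G3 by blast
qed

lemma isG_cong: "(\<And>i j. i < n \<Longrightarrow> j < n \<Longrightarrow> F i j = F' i j) \<Longrightarrow> isG n F = isG n F'"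
  unfolding isG_def by (intro iff_exI) auto

lemma isG_comp:
  assumes G: "isG n F" and p: "\<And>i. i < n \<Longrightarrow> p i < n"
  shows "isG n (\<lambda>i j. F (p i) (p j))"
proof -
  obtain c :: "nat \<Rightarrow> nat" and a s where as0: "\<forall>i<n. a i > 0 \<and> (s i = 1 \<or> s i = -1)"
    and ac0: "\<forall>i<n. \<forall>j<n. c i = c j \<longrightarrow> a i = a j"
    and Xe0: "\<forall>i<n. \<forall>j<n. F i j = (if c i = c j then a i * s i * s j else 0)"
    using G unfolding isG_def by blast
  have "\<forall>i<n. (a \<circ> p) i > 0 \<and> ((s \<circ> p) i = 1 \<or> (s \<circ> p) i = -1)" using as0 p by auto
  moreover have "\<forall>i<n. \<forall>j<n. (c \<circ> p) i = (c \<circ> p) j \<longrightarrow> (a \<circ> p) i = (a \<circ> p) j" using ac0 p by auto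
  moreover have "\<forall>i<n. \<forall>j<n. F (p i) (p j) = (if (c \<circ> p) i = (c \<circ> p) j then (a \<circ> p) i * (s \<circ> p) i * (s \<circ> p) j else 0)"
    using Xe0 p by auto
  ultimately show ?thesis unfolding isG_def by blast
qed

lemma blocks_G:
  "(\<forall>B\<in>set Bs. is_hbm_block B) \<Longrightarrow>
    diag_block_mat Bs \<in> carrier_mat (sum_list (map dim_row Bs)) (sum_list (map dim_row Bs)) \<and>
    isG (sum_list (map dim_row Bs)) (\<lambda>i j. diag_block_mat Bs $$ (i,j))"
proof (induction Bs)
  case Nil
  have "isG 0 F" for F unfolding isG_def by (intro exI[of _ "\<lambda>_. 0::nat"]) auto
  then show ?case by simp
next
  case (Cons B Bs)
  define N where "N = sum_list (map dim_row Bs)"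
  define D where "D = diag_block_mat Bs"
  from Cons have D: "D \<in> carrier_mat N N" and GD: "isG N (\<lambda>i j. D $$ (i,j))"
    by (auto simp: N_def D_def)
  obtain \<alpha> b where al: "\<alpha> > 0" and b: "\<forall>i<dim_vec b. b $ i = 1 \<or> b $ i = -1"
    and Bd: "B = \<alpha> \<cdot>\<^sub>m (mat (dim_vec b) (dim_vec b) (\<lambda>(i,j). b $ i * b $ j))"
    using Cons.prems by (auto simp: is_hbm_block_def)
  define m where "m = dim_vec b"
  have B: "B \<in> carrier_mat m m" by (simp add: Bd m_def)
  have Be: "B $$ (i,j) = \<alpha> * (b $ i * b $ j)" if "i < m" "j < m" for i j
    using that by (simp add: Bd m_def)
  obtain c :: "nat \<Rightarrow> nat" and a s where as: "\<forall>i<N. a i > 0 \<and> (s i = 1 \<or> s i = -1)"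
    and ac: "\<forall>i<N. \<forall>j<N. c i = c j \<longrightarrow> a i = a j"
    and Xe: "\<forall>i<N. \<forall>j<N. D $$ (i,j) = (if c i = c j then a i * s i * s j else 0)"
    using GD unfolding isG_def by blast
  have dm: "diag_block_mat (B # Bs) = four_block_mat B (0\<^sub>m m N) (0\<^sub>m N m) D"
    using B D by (simp add: D_def Let_def)
  have sz: "sum_list (map dim_row (B # Bs)) = m + N" using B by (simp add: N_def)
  have car: "diag_block_mat (B # Bs) \<in> carrier_mat (m + N) (m + N)"
    unfolding dm using B D by auto
  define c' where "c' i = (if i < m then 0 else Suc (c (i - m)))" for i
  define a' where "a' i = (if i < m then \<alpha> else a (i - m))" for i
  define s' where "s' i = (if i < m then b $ i else s (i - m))" for i
  have "\<forall>i<m+N. a' i > 0 \<and> (s' i = 1 \<or> s' i = -1)"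
    using as al b by (auto simp: a'_def s'_def m_def)
  moreover have "\<forall>i<m+N. \<forall>j<m+N. c' i = c' j \<longrightarrow> a' i = a' j"
    using ac by (auto simp: a'_def c'_def)
  moreover have "\<forall>i<m+N. \<forall>j<m+N. diag_block_mat (B # Bs) $$ (i,j) = (if c' i = c' j then a' i * s' i * s' j else 0)"
  proof (intro allI impI)
    fix i j assume i: "i < m + N" and j: "j < m + N"
    have "diag_block_mat (B # Bs) $$ (i,j) = (if i < m then if j < m then B $$ (i,j) else 0
       else if j < m then 0 else D $$ (i - m, j - m))"
      unfolding dm using B D i j by (subst index_mat_four_block) auto
    then show "diag_block_mat (B # Bs) $$ (i,j) = (if c' i = c' j then a' i * s' i * s' j else 0)"
      using Be Xe i j by (auto simp: a'_def c'_def s'_def)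
  qed
  ultimately have "isG (m+N) (\<lambda>i j. diag_block_mat (B # Bs) $$ (i,j))" unfolding isG_def by blast
  then show ?case using car sz by simp
qed

lemma perm_conj:
  assumes p: "p permutes {..<n}" and Y: "Y \<in> carrier_mat n n"
  shows "perm_mat n p * Y * (perm_mat n p)\<^sup>T \<in> carrier_mat n n"
    and "i < n \<Longrightarrow> j < n \<Longrightarrow> (perm_mat n p * Y * (perm_mat n p)\<^sup>T) $$ (i,j) = Y $$ (p i, p j)"
proof -
  define P where "P = perm_mat n p"
  have P: "P \<in> carrier_mat n n" by (simp add: P_def perm_mat_def)
  have pn: "p i < n" if "i < n" for i using permutes_in_image[OF p] that by auto
  show "perm_mat n p * Y * (perm_mat n p)\<^sup>T \<in> carrier_mat n n" using P Y unfolding P_def[symmetric] by auto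
  have Pe: "P $$ (i,k) = (if p i = k then 1 else 0)" if "i < n" "k < n" for i k
    using that by (simp add: P_def perm_mat_def)
  have PY: "(P * Y) $$ (i,l) = Y $$ (p i, l)" if "i < n" "l < n" for i l
  proof -
    have "(P * Y) $$ (i,l) = (\<Sum>k\<in>{0..<n}. P $$ (i,k) * Y $$ (k,l))"
      using P Y that by (simp add: scalar_prod_def)
    also have "\<dots> = (\<Sum>k\<in>{0..<n}. if k = p i then Y $$ (p i, l) else 0)"
      using that by (intro sum.cong) (auto simp: P_def perm_mat_def)
    also have "\<dots> = Y $$ (p i, l)" using pn[OF that(1)] by simp
    finally show ?thesis .
  qed
  assume i: "i < n" and j: "j < n"
  have "(P * Y * P\<^sup>T) $$ (i,j) = (\<Sum>l\<in>{0..<n}. (P * Y) $$ (i,l) * P\<^sup>T $$ (l,j))"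
    using P Y i j by (subst index_mult_mat(1)) (auto simp: scalar_prod_def)
  also have "\<dots> = (\<Sum>l\<in>{0..<n}. if l = p j then Y $$ (p i, p j) else 0)"
    using i j P by (intro sum.cong) (auto simp: PY Pe)
  also have "\<dots> = Y $$ (p i, p j)" using pn[OF j] by simp
  finally show "(perm_mat n p * Y * (perm_mat n p)\<^sup>T) $$ (i,j) = Y $$ (p i, p j)" unfolding P_def .
qed

lemma Q_sub:
  assumes "X \<in> Q_HbM n"
  shows "X \<in> carrier_mat n n \<and> isG n (\<lambda>i j. X $$ (i,j))"
proof -
  obtain P Bs where PP: "is_perm_mat n P" and Bs: "\<forall>B\<in>set Bs. is_hbm_block B"
    and sz: "sum_list (map dim_row Bs) = n" and Xd: "X = P * diag_block_mat Bs * P\<^sup>T"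
    and XS: "X \<in> S_nzrow n"
    using assms unfolding Q_HbM_def by blast
  obtain p where p: "p permutes {..<n}" and Pd: "P = perm_mat n p" using PP by (auto simp: is_perm_mat_def)
  have Y: "diag_block_mat Bs \<in> carrier_mat n n" and GY: "isG n (\<lambda>i j. diag_block_mat Bs $$ (i,j))"
    using blocks_G[OF Bs] sz by auto
  have pn: "p i < n" if "i < n" for i using permutes_in_image[OF p] that by auto
  have "isG n (\<lambda>i j. diag_block_mat Bs $$ (p i, p j))" by (rule isG_comp[OF GY pn])
  moreover have "isG n (\<lambda>i j. X $$ (i,j)) = isG n (\<lambda>i j. diag_block_mat Bs $$ (p i, p j))"
    by (rule isG_cong) (simp add: Xd Pd perm_conj(2)[OF p Y])
  ultimately show ?thesis using XS by (simp add: S_nzrow_def)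
qed

lemma shift_bij: "bij_betw (\<lambda>k::nat. k - m) {m..<N} {..<N - m}"
  by (rule bij_betw_byWitness[where f'="\<lambda>k. k + m"]) auto

lemma build_blocks:
  fixes c :: "nat \<Rightarrow> nat" and a s :: "nat \<Rightarrow> real"
  assumes "finite I" "card I = N" "\<forall>i\<in>I. a i > 0 \<and> (s i = 1 \<or> s i = -1)"
    "\<forall>i\<in>I. \<forall>j\<in>I. c i = c j \<longrightarrow> a i = a j"
  shows "\<exists>q Bs. bij_betw q {..<N} I \<and> (\<forall>B\<in>set Bs. is_hbm_block B) \<and> sum_list (map dim_row Bs) = N \<and>
     (\<forall>k<N. \<forall>l<N. diag_block_mat Bs $$ (k,l) = (if c (q k) = c (q l) then a (q k) * s (q k) * s (q l) else 0))"
  using assms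
proof (induction N arbitrary: I rule: less_induct)
  case (less N I)
  show ?case
  proof (cases "I = {}")
    case True
    hence "N = 0" using less.prems(2) by simp
    then show ?thesis using True
      by (intro exI[of _ id] exI[of _ "[]"]) (auto simp: bij_betw_def)
  next
    case False
    then obtain i0 where i0: "i0 \<in> I" by auto
    define C where "C = {j\<in>I. c j = c i0}"
    define R where "R = I - C"
    define m where "m = card C"
    have finC: "finite C" and finR: "finite R" using less.prems(1) by (auto simp: C_def R_def)
    have CI: "C \<subseteq> I" by (auto simp: C_def)
    have m1: "m \<ge> 1" using i0 finC by (auto simp: m_def C_def Suc_le_eq card_gt_0_iff)
    have cardR: "card R = N - m" using card_Diff_subset[OF finC CI] less.prems(2) by (simp add: R_def m_def)
    have mN: "m \<le> N" using card_mono[OF less.prems(1) CI] less.prems(2) by (simp add: m_def)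
    have RI: "R \<subseteq> I" by (auto simp: R_def)
    have ltN: "N - m < N" using m1 mN by auto
    have p3: "\<forall>i\<in>R. a i > 0 \<and> (s i = 1 \<or> s i = -1)" using less.prems(3) RI by auto
    have p4: "\<forall>i\<in>R. \<forall>j\<in>R. c i = c j \<longrightarrow> a i = a j" using less.prems(4) RI by blast
    obtain qR BsR where qR: "bij_betw qR {..<N - m} R" and BsR: "\<forall>B\<in>set BsR. is_hbm_block B"
      and szR: "sum_list (map dim_row BsR) = N - m"
      and eR: "\<forall>k<N - m. \<forall>l<N - m. diag_block_mat BsR $$ (k,l) = (if c (qR k) = c (qR l) then a (qR k) * s (qR k) * s (qR l) else 0)"
      using less.IH[OF ltN finR cardR p3 p4] by blast
    obtain e where e: "bij_betw e {..<m} C" using ex_bij_betw_nat_finite[OF finC] by (auto simp: m_def atLeast0LessThan)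
    have eC: "e k \<in> C" if "k < m" for k using e that by (auto simp: bij_betw_def)
    define b where "b = vec m (\<lambda>k. s (e k))"
    define B where "B = a i0 \<cdot>\<^sub>m (mat (dim_vec b) (dim_vec b) (\<lambda>(i,j). b $ i * b $ j))"
    have hB: "is_hbm_block B" unfolding is_hbm_block_def B_def
      using less.prems(3) i0 eC CI by (intro exI[of _ "a i0"] exI[of _ b]) (auto simp: b_def)
    have B: "B \<in> carrier_mat m m" by (simp add: B_def b_def)
    have Be: "B $$ (i,j) = a i0 * (s (e i) * s (e j))" if "i < m" "j < m" for i j
      using that by (simp add: B_def b_def)
    define D where "D = diag_block_mat BsR"
    have D: "D \<in> carrier_mat (N - m) (N - m)" using blocks_G[OF BsR] szR by (simp add: D_def)
    define q where "q k = (if k < m then e k else qR (k - m))" for k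
    have dm: "diag_block_mat (B # BsR) = four_block_mat B (0\<^sub>m m (N - m)) (0\<^sub>m (N - m) m) D"
      using B D by (simp add: D_def Let_def)
    have bq1: "bij_betw q {..<m} C" using e by (subst bij_betw_cong[where g=e]) (auto simp: q_def)
    have "bij_betw (qR \<circ> (\<lambda>k. k - m)) {m..<N} R" by (rule bij_betw_trans[OF shift_bij qR])
    hence bq2: "bij_betw q {m..<N} R" by (subst bij_betw_cong[where g="qR \<circ> (\<lambda>k. k - m)"]) (auto simp: q_def)
    have "bij_betw q ({..<m} \<union> {m..<N}) (C \<union> R)"
      by (rule bij_betw_combine[OF bq1 bq2]) (auto simp: R_def)
    moreover have "{..<m} \<union> {m..<N} = {..<N}" using mN by auto
    moreover have "C \<union> R = I" using CI by (auto simp: R_def)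
    ultimately have bq: "bij_betw q {..<N} I" by simp
    have qR_R: "qR k \<in> R" if "k < N - m" for k using qR that by (auto simp: bij_betw_def)
    have ents: "\<forall>k<N. \<forall>l<N. diag_block_mat (B # BsR) $$ (k,l) = (if c (q k) = c (q l) then a (q k) * s (q k) * s (q l) else 0)"
    proof (intro allI impI)
      fix k l assume k: "k < N" and l: "l < N"
      have DE: "diag_block_mat (B # BsR) $$ (k,l) = (if k < m then if l < m then B $$ (k,l) else 0
         else if l < m then 0 else D $$ (k - m, l - m))"
        unfolding dm using B D k l mN by (subst index_mat_four_block) auto
      have ce: "c (e k) = c i0" if "k < m" for k using eC[OF that] by (auto simp: C_def)
      have ae: "a (e k) = a i0" if "k < m" for k
      proof -
        have ek: "e k \<in> I" "c (e k) = c i0" using eC[OF that] by (auto simp: C_def)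
        show ?thesis using less.prems(4)[rule_format, OF ek(1) i0] ek(2) by simp
      qed
      have cr: "c (qR k) \<noteq> c i0" if "k < N - m" for k using qR_R[OF that] by (auto simp: R_def C_def)
      show "diag_block_mat (B # BsR) $$ (k,l) = (if c (q k) = c (q l) then a (q k) * s (q k) * s (q l) else 0)"
      proof (cases "k < m")
        case True
        note kt = True
        show ?thesis
        proof (cases "l < m")
          case True
          then show ?thesis using kt DE Be[OF kt True] ce[OF kt] ce[OF True] ae[OF kt] by (simp add: q_def)
        next
          case False
          have "c (q l) \<noteq> c (q k)" using cr[of "l - m"] ce[OF kt] kt False l diff_less_mono[of l N m] by (simp add: q_def)
          then show ?thesis using kt False DE by (simp add: q_def)
        qed
      next
        case False
        note kf = False
        show ?thesis
        proof (cases "l < m")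
          case True
          have "c (q l) \<noteq> c (q k)" using cr[of "k - m"] ce[OF True] True kf k diff_less_mono[of k N m] by (simp add: q_def)
          then show ?thesis using kf True DE by (simp add: q_def)
        next
          case False
          have "D $$ (k - m, l - m) = (if c (qR (k-m)) = c (qR (l-m)) then a (qR (k-m)) * s (qR (k-m)) * s (qR (l-m)) else 0)"
            using eR kf False k l unfolding D_def by auto
          then show ?thesis using kf False DE by (simp add: q_def)
        qed
      qed
    qed
    show ?thesis using bq hB BsR szR mN ents B
      by (intro exI[of _ q] exI[of _ "B # BsR"]) auto
  qed
qed

lemma G_Q:
  assumes X: "X \<in> carrier_mat n n" and G: "isG n (\<lambda>i j. X $$ (i,j))"
  shows "X \<in> Q_HbM n"
proof -
  obtain c :: "nat \<Rightarrow> nat" and a s where as0: "\<forall>i<n. a i > 0 \<and> (s i = 1 \<or> s i = -1)"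
    and ac0: "\<forall>i<n. \<forall>j<n. c i = c j \<longrightarrow> a i = a j"
    and Xe0: "\<forall>i<n. \<forall>j<n. X $$ (i,j) = (if c i = c j then a i * s i * s j else 0)"
    using G unfolding isG_def by blast
  have XS: "X \<in> S_nzrow n" using G_fix[OF X G] by blast
  have h3: "\<forall>i\<in>{..<n}. a i > 0 \<and> (s i = 1 \<or> s i = -1)" using as0 by blast
  have h4: "\<forall>i\<in>{..<n}. \<forall>j\<in>{..<n}. c i = c j \<longrightarrow> a i = a j" using ac0 by blast
  obtain q Bs where q: "bij_betw q {..<n} {..<n}" and Bs: "\<forall>B\<in>set Bs. is_hbm_block B"
    and sz: "sum_list (map dim_row Bs) = n"
    and eB: "\<forall>k<n. \<forall>l<n. diag_block_mat Bs $$ (k,l) = (if c (q k) = c (q l) then a (q k) * s (q k) * s (q l) else 0)"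
    using build_blocks[OF finite_lessThan card_lessThan h3 h4] by blast
  define p where "p i = (if i < n then inv_into {..<n} q i else i)" for i
  have "bij_betw (inv_into {..<n} q) {..<n} {..<n}" by (rule bij_betw_inv_into[OF q])
  hence bp: "bij_betw p {..<n} {..<n}" by (subst bij_betw_cong[where g="inv_into {..<n} q"]) (auto simp: p_def)
  have p: "p permutes {..<n}" by (rule bij_imp_permutes[OF bp]) (simp add: p_def)
  have qp: "q (p i) = i" if "i < n" for i
    using bij_betw_inv_into_right[OF q, of i] that by (simp add: p_def)
  have pn: "p i < n" if "i < n" for i using bp that by (auto simp: bij_betw_def)
  define Y where "Y = diag_block_mat Bs"
  have Y: "Y \<in> carrier_mat n n" using blocks_G[OF Bs] sz by (simp add: Y_def)
  have Xd: "X = perm_mat n p * Y * (perm_mat n p)\<^sup>T"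
  proof (rule eq_matI)
    fix i j assume i: "i < dim_row (perm_mat n p * Y * (perm_mat n p)\<^sup>T)" and j: "j < dim_col (perm_mat n p * Y * (perm_mat n p)\<^sup>T)"
    have i': "i < n" and j': "j < n" using i j perm_conj(1)[OF p Y] by auto
    have "(perm_mat n p * Y * (perm_mat n p)\<^sup>T) $$ (i,j) = Y $$ (p i, p j)"
      by (rule perm_conj(2)[OF p Y i' j'])
    also have "\<dots> = X $$ (i,j)"
      unfolding Y_def using eB pn[OF i'] pn[OF j'] qp[OF i'] qp[OF j'] Xe0 i' j' by simp
    finally show "X $$ (i,j) = (perm_mat n p * Y * (perm_mat n p)\<^sup>T) $$ (i,j)" by simp
  qed (use perm_conj(1)[OF p Y] X in auto)
  have dimB: "\<forall>B\<in>set Bs. is_hbm_block B \<and> dim_row B \<le> n"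
    using Bs sz member_le_sum_list[of _ "map dim_row Bs"] by auto
  have "is_perm_mat n (perm_mat n p)" using p by (auto simp: is_perm_mat_def)
  then show ?thesis unfolding Q_HbM_def
    by (intro CollectI exI[of _ "perm_mat n p"] exI[of _ Bs] conjI) (use dimB sz Xd XS Y_def in auto)
qed

theorem theorem3p4:
  fixes n :: nat
  shows "Q_HbM n = {X \<in> S_nzrow n. f_HbM X = X} \<and>
         (\<forall>X\<in>Q_HbM n. \<exists>\<V>. partition_on {..<n} \<V> \<and>
           (\<forall>i<n. \<forall>j<n. (\<forall>V\<in>\<V>. \<not> (i \<in> V \<and> j \<in> V)) \<longrightarrow> X $$ (i,j) = 0) \<and>
           (\<forall>V\<in>\<V>. (\<forall>i<card V. \<forall>j<card V. submatrix X V V $$ (i,j) \<noteq> 0)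
                    \<and> social_balance (submatrix X V V)))"
proof (intro conjI ballI)
  show "Q_HbM n = {X \<in> S_nzrow n. f_HbM X = X}"
  proof (intro equalityI subsetI)
    fix X assume "X \<in> Q_HbM n"
    then have "X \<in> carrier_mat n n \<and> isG n (\<lambda>i j. X $$ (i,j))" by (rule Q_sub)
    then show "X \<in> {X \<in> S_nzrow n. f_HbM X = X}" using G_fix[of X n] by simp
  next
    fix X assume "X \<in> {X \<in> S_nzrow n. f_HbM X = X}"
    then have XS: "X \<in> S_nzrow n" and F: "f_HbM X = X" by auto
    have "X \<in> carrier_mat n n" using XS by (simp add: S_nzrow_def)
    then show "X \<in> Q_HbM n" by (rule G_Q[OF _ fix_G[OF XS F]])
  qed
next
  fix X assume "X \<in> Q_HbM n"
  then have QQ: "X \<in> carrier_mat n n \<and> isG n (\<lambda>i j. X $$ (i,j))" by (rule Q_sub)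
  show "\<exists>\<V>. partition_on {..<n} \<V> \<and>
           (\<forall>i<n. \<forall>j<n. (\<forall>V\<in>\<V>. \<not> (i \<in> V \<and> j \<in> V)) \<longrightarrow> X $$ (i,j) = 0) \<and>
           (\<forall>V\<in>\<V>. (\<forall>i<card V. \<forall>j<card V. submatrix X V V $$ (i,j) \<noteq> 0)
                    \<and> social_balance (submatrix X V V))"
    by (rule G_part2[OF QQ[THEN conjunct1] QQ[THEN conjunct2]])
qed

end
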